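(* Let $K$ be a field, $V$ a vector space over $K$, and $f_L,f_R,g_L,g_R:V\to V$ linear maps, each of them nonzero. Let $\delta,\gamma\in K$ with $(\delta,\gamma)\ne(0,0)$. Then every $(\delta,\gamma)$-derivation $D$ of the algebra $A(f_L,f_R,g_L,g_R)$ has the form $$D(e)=\begin{cases}0&\text{if }\delta+\gamma\ne1,\\ \beta e&\text{if }\delta+\gamma=1,\end{cases}\qquad D(a)=\alpha a+v_a+w_a',$$ $$D(v)=\varphi(v)+\psi(v)',\qquad D(v')=\widetilde\varphi(v)+\widetilde\psi(v)'\quad(v\in V),$$ for some $\alpha,\beta\in K$, $v_a,w_a\in V$ and linear maps $\varphi,\widetilde\varphi,\psi,\widetilde\psi:V\to V$, which satisfy $$(\delta f_R+\gamma f_L)(v_a)=0,\qquad (\delta g_R+\gamma g_L)(w_a)=0,$$ and $$\begin{aligned} \widetilde\varphi\circ f_L&=\gamma\, g_L\circ\psi, & \widetilde\psi\circ f_L&=\delta\alpha f_L+\gamma f_L\circ\varphi,\\ \widetilde\varphi\circ f_R&=\delta\, g_R\circ\psi, & \widetilde\psi\circ f_R&=\gamma\alpha f_R+\delta f_R\circ\varphi,\\ \varphi\circ g_L&=\delta\alpha g_L+\gamma g_L\circ\widetilde\psi, & \psi\circ g_L&=\gamma f_L\circ\widetilde\varphi,\\ \varphi\circ g_R&=\gamma\alpha g_R+\delta g_R\circ\widetilde\psi, & \psi\circ g_R&=\delta f_R\circ\widetilde\varphi. \end{aligned}$$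
   Context: For fixed $\delta,\gamma\in K$, a $(\delta,\gamma)$-derivation of an algebra $A$ is a linear map $D:A\to A$ with $D(xy)=\delta D(x)y+\gamma xD(y)$ for all $x,y\in A$. Let $V'$ be a second copy of $V$, identified with $V$ via a linear bijection $v\mapsto v'$. The algebra $A(f_L,f_R,g_L,g_R)$ is the vector space $Ke\oplus Ka\oplus V\oplus V'$ (with $e,a$ two new basis elements) with bilinear multiplication determined by $e^2=e$, $a^2=0$, $av=f_L(v)'$, $va=f_R(v)'$, $av'=g_L(v)$, $v'a=g_R(v)$ for $v\in V$, and all other products among $e$, $a$, elements of $V$ and elements of $V'$ equal to zero. (No associativity of this algebra is assumed in the lemma.) *)

theory Defs
  imports Complex_Main "HOL-Library.Product_Plus"
begin

text \<open>Elements of A(fL,fR,gL,gR) = Ke + Ka + V + V' are represented as tuples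
  (x1, x2, v, w) meaning x1 e + x2 a + v + w'.\<close>

definition scaleA :: "('k \<Rightarrow> 'v \<Rightarrow> 'v) \<Rightarrow> 'k::field \<Rightarrow> 'k \<times> 'k \<times> 'v \<times> 'v \<Rightarrow> 'k \<times> 'k \<times> 'v \<times> 'v" where
  "scaleA scale c x = (case x of (x1, x2, v, w) \<Rightarrow> (c * x1, c * x2, scale c v, scale c w))"

text \<open>Bilinear multiplication determined by e e = e, a a = 0, a v = fL(v)', v a = fR(v)',
  a v' = gL(v), v' a = gR(v), all other products of basis parts zero.\<close>
definition multA ::
  "('k::field \<Rightarrow> 'v::ab_group_add \<Rightarrow> 'v) \<Rightarrow> ('v \<Rightarrow> 'v) \<Rightarrow> ('v \<Rightarrow> 'v) \<Rightarrow> ('v \<Rightarrow> 'v) \<Rightarrow> ('v \<Rightarrow> 'v)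
   \<Rightarrow> 'k \<times> 'k \<times> 'v \<times> 'v \<Rightarrow> 'k \<times> 'k \<times> 'v \<times> 'v \<Rightarrow> 'k \<times> 'k \<times> 'v \<times> 'v" where
  "multA scale fL fR gL gR x y = (case x of (x1, x2, v, w) \<Rightarrow> case y of (y1, y2, u, z) \<Rightarrow>
     (x1 * y1, 0, scale x2 (gL z) + scale y2 (gR w), scale x2 (fL u) + scale y2 (fR v)))"

definition is_dg_derivation ::
  "('k::field \<Rightarrow> 'v::ab_group_add \<Rightarrow> 'v) \<Rightarrow> ('v \<Rightarrow> 'v) \<Rightarrow> ('v \<Rightarrow> 'v) \<Rightarrow> ('v \<Rightarrow> 'v) \<Rightarrow> ('v \<Rightarrow> 'v)
   \<Rightarrow> 'k \<Rightarrow> 'k \<Rightarrow> ('k \<times> 'k \<times> 'v \<times> 'v \<Rightarrow> 'k \<times> 'k \<times> 'v \<times> 'v) \<Rightarrow> bool" where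
  "is_dg_derivation scale fL fR gL gR \<delta> \<gamma> D \<longleftrightarrow>
     Vector_Spaces.linear (scaleA scale) (scaleA scale) D \<and>
     (\<forall>x y. D (multA scale fL fR gL gR x y) =
        scaleA scale \<delta> (multA scale fL fR gL gR (D x) y) + scaleA scale \<gamma> (multA scale fL fR gL gR x (D y)))"

end

theory Submission
  imports Defs
begin

theorem lemma2:
  fixes scale :: "'k::field \<Rightarrow> 'v::ab_group_add \<Rightarrow> 'v"
    and fL fR gL gR :: "'v \<Rightarrow> 'v"
    and \<delta> \<gamma> :: 'k
    and D :: "'k \<times> 'k \<times> 'v \<times> 'v \<Rightarrow> 'k \<times> 'k \<times> 'v \<times> 'v"
  assumes vs: "vector_space scale"
    and lin: "Vector_Spaces.linear scale scale fL" "Vector_Spaces.linear scale scale fR"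
             "Vector_Spaces.linear scale scale gL" "Vector_Spaces.linear scale scale gR"
    and nz: "fL \<noteq> (\<lambda>v. 0)" "fR \<noteq> (\<lambda>v. 0)" "gL \<noteq> (\<lambda>v. 0)" "gR \<noteq> (\<lambda>v. 0)"
    and dg: "(\<delta>, \<gamma>) \<noteq> (0, 0)"
    and der: "is_dg_derivation scale fL fR gL gR \<delta> \<gamma> D"
  shows "\<exists>\<alpha> \<beta> va wa \<phi> \<psi> \<phi>t \<psi>t.
    Vector_Spaces.linear scale scale \<phi> \<and> Vector_Spaces.linear scale scale \<psi> \<and>
    Vector_Spaces.linear scale scale \<phi>t \<and> Vector_Spaces.linear scale scale \<psi>t \<and>
    D (1, 0, 0, 0) = (if \<delta> + \<gamma> \<noteq> 1 then (0, 0, 0, 0) else (\<beta>, 0, 0, 0)) \<and>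
    D (0, 1, 0, 0) = (0, \<alpha>, va, wa) \<and>
    (\<forall>v. D (0, 0, v, 0) = (0, 0, \<phi> v, \<psi> v)) \<and>
    (\<forall>v. D (0, 0, 0, v) = (0, 0, \<phi>t v, \<psi>t v)) \<and>
    scale \<delta> (fR va) + scale \<gamma> (fL va) = 0 \<and>
    scale \<delta> (gR wa) + scale \<gamma> (gL wa) = 0 \<and>
    (\<forall>v. \<phi>t (fL v) = scale \<gamma> (gL (\<psi> v))) \<and>
    (\<forall>v. \<psi>t (fL v) = scale (\<delta> * \<alpha>) (fL v) + scale \<gamma> (fL (\<phi> v))) \<and>
    (\<forall>v. \<phi>t (fR v) = scale \<delta> (gR (\<psi> v))) \<and>
    (\<forall>v. \<psi>t (fR v) = scale (\<gamma> * \<alpha>) (fR v) + scale \<delta> (fR (\<phi> v))) \<and>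
    (\<forall>v. \<phi> (gL v) = scale (\<delta> * \<alpha>) (gL v) + scale \<gamma> (gL (\<psi>t v))) \<and>
    (\<forall>v. \<psi> (gL v) = scale \<gamma> (fL (\<phi>t v))) \<and>
    (\<forall>v. \<phi> (gR v) = scale (\<gamma> * \<alpha>) (gR v) + scale \<delta> (gR (\<psi>t v))) \<and>
    (\<forall>v. \<psi> (gR v) = scale \<delta> (fR (\<phi>t v)))"
proof -
  let ?M = "multA scale fL fR gL gR"
  let ?S = "scaleA scale"
  have linD: "Vector_Spaces.linear ?S ?S D" and P: "\<And>x y. D (?M x y) = ?S \<delta> (?M (D x) y) + ?S \<gamma> (?M x (D y))"
    using der unfolding is_dg_derivation_def by auto
  have Dadd: "\<And>x y. D (x + y) = D x + D y"
    using linD Vector_Spaces.linear_iff[of ?S ?S D] by blast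
  have Dsc: "\<And>c x. D (?S c x) = ?S c (D x)"
    using linD Vector_Spaces.linear_iff[of ?S ?S D] by blast
  have D0: "D 0 = 0" using Dadd[of 0 0] by simp
  have s0[simp]: "\<And>c. scale c 0 = 0" using vs by (simp add: vector_space.scale_eq_0_iff)
  have s0l[simp]: "\<And>x. scale 0 x = 0" using vs by (simp add: vector_space.scale_eq_0_iff)
  have s1[simp]: "\<And>x. scale 1 x = x" using vs by (simp add: vector_space_def)
  have ssc: "\<And>a b x. scale a (scale b x) = scale (a * b) x" using vs by (simp add: vector_space_def)
  have seq: "\<And>c x. scale c x = 0 \<longleftrightarrow> c = 0 \<or> x = 0" using vs by (simp add: vector_space.scale_eq_0_iff)
  have lz: "\<And>f. Vector_Spaces.linear scale scale f \<Longrightarrow> f 0 = 0"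
  proof -
    fix f assume "Vector_Spaces.linear scale scale f"
    then have "f (0+0) = f 0 + f 0" unfolding Vector_Spaces.linear_iff by blast
    then show "f 0 = 0" by simp
  qed
  have z[simp]: "fL 0 = 0" "fR 0 = 0" "gL 0 = 0" "gR 0 = 0" using lz lin by auto
  have D0': "D (0,0,0,0) = (0,0,0,0)" using D0 by (simp add: zero_prod_def)
  note defs = multA_def scaleA_def
  obtain b1 b2 p q where De: "D (1,0,0,0) = (b1,b2,p,q)" by (cases "D (1,0,0,0)") auto
  obtain a1 \<alpha> va wa where Da: "D (0,1,0,0) = (a1,\<alpha>,va,wa)" by (cases "D (0,1,0,0)") auto
  define c1 where "c1 v = fst (D (0,0,v,0))" for v
  define c2 where "c2 v = fst (snd (D (0,0,v,0)))" for v
  define \<phi> where "\<phi> v = fst (snd (snd (D (0,0,v,0))))" for v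
  define \<psi> where "\<psi> v = snd (snd (snd (D (0,0,v,0))))" for v
  define d1 where "d1 v = fst (D (0,0,0,v))" for v
  define d2 where "d2 v = fst (snd (D (0,0,0,v)))" for v
  define \<phi>t where "\<phi>t v = fst (snd (snd (D (0,0,0,v))))" for v
  define \<psi>t where "\<psi>t v = snd (snd (snd (D (0,0,0,v))))" for v
  have Dv: "\<And>v. D (0,0,v,0) = (c1 v, c2 v, \<phi> v, \<psi> v)" by (simp add: c1_def c2_def \<phi>_def \<psi>_def)
  have Dw: "\<And>v. D (0,0,0,v) = (d1 v, d2 v, \<phi>t v, \<psi>t v)" by (simp add: d1_def d2_def \<phi>t_def \<psi>t_def)
  have ee: "b2 = 0 \<and> p = 0 \<and> q = 0 \<and> b1 = (\<delta>+\<gamma>) * b1"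
    using P[of "(1,0,0,0)" "(1,0,0,0)"] De by (simp add: defs algebra_simps)
  have aa: "scale \<delta> (fR va) + scale \<gamma> (fL va) = 0 \<and> scale \<delta> (gR wa) + scale \<gamma> (gL wa) = 0"
    using P[of "(0,1,0,0)" "(0,1,0,0)"] Da D0' by (simp add: defs)
  have ea: "\<gamma> * a1 = 0" using P[of "(1,0,0,0)" "(0,1,0,0)"] Da De ee D0' by (simp add: defs)
  have ae: "\<delta> * a1 = 0" using P[of "(0,1,0,0)" "(1,0,0,0)"] Da De ee D0' by (simp add: defs)
  have a10: "a1 = 0" using ea ae dg by auto
  have ev: "\<And>v. \<gamma> * c1 v = 0 \<and> \<delta> * c1 v = 0"
    using P[of "(1,0,0,0)" "(0,0,v,0)" for v] P[of "(0,0,v,0)" "(1,0,0,0)" for v] De ee Dv D0' by (simp add: defs)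
  have ew: "\<And>v. \<gamma> * d1 v = 0 \<and> \<delta> * d1 v = 0"
    using P[of "(1,0,0,0)" "(0,0,0,v)" for v] P[of "(0,0,0,v)" "(1,0,0,0)" for v] De ee Dw D0' by (simp add: defs)
  have c10: "\<And>v. c1 v = 0" "\<And>v. d1 v = 0" using ev ew dg by auto
  have vw: "\<And>v w. scale (\<delta> * c2 v) (gL w) = 0 \<and> scale (\<gamma> * d2 w) (fR v) = 0"
  proof -
    fix v w
    show "scale (\<delta> * c2 v) (gL w) = 0 \<and> scale (\<gamma> * d2 w) (fR v) = 0"
      using P[of "(0,0,v,0)" "(0,0,0,w)"] Dv Dw D0' by (simp add: defs ssc)
  qed
  have wv: "\<And>v w. scale (\<gamma> * c2 v) (gR w) = 0 \<and> scale (\<delta> * d2 w) (fL v) = 0"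
  proof -
    fix v w
    show "scale (\<gamma> * c2 v) (gR w) = 0 \<and> scale (\<delta> * d2 w) (fL v) = 0"
      using P[of "(0,0,0,w)" "(0,0,v,0)"] Dv Dw D0' by (simp add: defs ssc)
  qed
  have ngL: "\<exists>w. gL w \<noteq> 0" "\<exists>w. gR w \<noteq> 0" "\<exists>w. fL w \<noteq> 0" "\<exists>w. fR w \<noteq> 0" using nz by auto
  have c20: "\<And>v. c2 v = 0"
  proof -
    fix v
    have "\<delta> * c2 v = 0" using vw[of v] ngL(1) seq by blast
    moreover have "\<gamma> * c2 v = 0" using wv[of v] ngL(2) seq by blast
    ultimately show "c2 v = 0" using dg by auto
  qed
  have d20: "\<And>v. d2 v = 0"
  proof -
    fix w
    have "\<gamma> * d2 w = 0" using vw[of _ w] ngL(4) seq by blast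
    moreover have "\<delta> * d2 w = 0" using wv[of _ w] ngL(3) seq by blast
    ultimately show "d2 w = 0" using dg by auto
  qed
  have Dv': "\<And>v. D (0,0,v,0) = (0, 0, \<phi> v, \<psi> v)" using Dv c10 c20 by simp
  have Dw': "\<And>v. D (0,0,0,v) = (0, 0, \<phi>t v, \<psi>t v)" using Dw c10 d20 by simp
  have lphi: "Vector_Spaces.linear scale scale \<phi> \<and> Vector_Spaces.linear scale scale \<psi>"
  proof -
    have A: "\<phi> (u+v) = \<phi> u + \<phi> v \<and> \<psi> (u+v) = \<psi> u + \<psi> v" for u v
      using Dadd[of "(0,0,u,0)" "(0,0,v,0)"] Dv' by simp
    have B: "\<phi> (scale c v) = scale c (\<phi> v) \<and> \<psi> (scale c v) = scale c (\<psi> v)" for c v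
      using Dsc[of c "(0,0,v,0)"] Dv' by (simp add: defs)
    show ?thesis using A B vs unfolding Vector_Spaces.linear_iff by blast
  qed
  have lphit: "Vector_Spaces.linear scale scale \<phi>t \<and> Vector_Spaces.linear scale scale \<psi>t"
  proof -
    have A: "\<phi>t (u+v) = \<phi>t u + \<phi>t v \<and> \<psi>t (u+v) = \<psi>t u + \<psi>t v" for u v
      using Dadd[of "(0,0,0,u)" "(0,0,0,v)"] Dw' by simp
    have B: "\<phi>t (scale c v) = scale c (\<phi>t v) \<and> \<psi>t (scale c v) = scale c (\<psi>t v)" for c v
      using Dsc[of c "(0,0,0,v)"] Dw' by (simp add: defs)
    show ?thesis using A B vs unfolding Vector_Spaces.linear_iff by blast
  qed
  have r1: "\<phi>t (fL v) = scale \<gamma> (gL (\<psi> v)) \<and> \<psi>t (fL v) = scale (\<delta> * \<alpha>) (fL v) + scale \<gamma> (fL (\<phi> v))" for v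
    using P[of "(0,1,0,0)" "(0,0,v,0)"] Da a10 Dv' Dw' by (simp add: defs ssc)
  have r2: "\<phi>t (fR v) = scale \<delta> (gR (\<psi> v)) \<and> \<psi>t (fR v) = scale (\<gamma> * \<alpha>) (fR v) + scale \<delta> (fR (\<phi> v))" for v
    using P[of "(0,0,v,0)" "(0,1,0,0)"] Da a10 Dv' Dw' by (simp add: defs ssc add.commute)
  have r3: "\<phi> (gL v) = scale (\<delta> * \<alpha>) (gL v) + scale \<gamma> (gL (\<psi>t v)) \<and> \<psi> (gL v) = scale \<gamma> (fL (\<phi>t v))" for v
    using P[of "(0,1,0,0)" "(0,0,0,v)"] Da a10 Dv' Dw' by (simp add: defs ssc)
  have r4: "\<phi> (gR v) = scale (\<gamma> * \<alpha>) (gR v) + scale \<delta> (gR (\<psi>t v)) \<and> \<psi> (gR v) = scale \<delta> (fR (\<phi>t v))" for v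
    using P[of "(0,0,0,v)" "(0,1,0,0)"] Da a10 Dv' Dw' by (simp add: defs ssc add.commute)
  have eD: "D (1, 0, 0, 0) = (if \<delta> + \<gamma> \<noteq> 1 then (0, 0, 0, 0) else (b1, 0, 0, 0))"
  proof (cases "\<delta> + \<gamma> = 1")
    case True then show ?thesis using De ee by simp
  next
    case False
    have "(1 - (\<delta>+\<gamma>)) * b1 = 0" using ee by (simp add: algebra_simps)
    then have "b1 = 0" using False by simp
    then show ?thesis using De ee False by simp
  qed
  show ?thesis
    apply (rule exI[of _ \<alpha>], rule exI[of _ b1], rule exI[of _ va], rule exI[of _ wa])
    apply (rule exI[of _ \<phi>], rule exI[of _ \<psi>], rule exI[of _ \<phi>t], rule exI[of _ \<psi>t])
    using lphi lphit eD Da a10 Dv' Dw' aa r1 r2 r3 r4 by simp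
qed

end
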